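(* Let $w_1=(x_2'-x_2)y_1-(x_1'-x_1)y_2$ and $w_2=(x_2'-x_2)y_1'-(x_1'-x_1)y_2'$, and let $J=\{f\in K[X;Y]: fw_1=0\}\cap\{f\in K[X;Y]: fw_2=0\}$. Then $J$, viewed as a $K[X]$-module, is spanned by $h_1,h_2,h_3,h_4$, where $h_1=y_1y_2y_1'y_2'$, $h_2=y_1y_2\big(y_1'(x_2'-x_2)-y_2'(x_1'-x_1)\big)$, $h_3=y_1'y_2'\big(y_1(x_2'-x_2)-y_2(x_1'-x_1)\big)$, $h_4=\big(y_1'(x_2'-x_2)-y_2'(x_1'-x_1)\big)\big(y_1(x_2'-x_2)-y_2(x_1'-x_1)\big)$.
   Context: $K$ is an infinite field of characteristic different from 2. Let $X=\{x_1,x_2,x_1',x_2'\}$ and $Y=\{y_1,y_2,y_1',y_2'\}$, and let $K[X;Y]\cong K[X]\otimes_K E(Y)$ be the free supercommutative algebra: the $x$'s are even commuting variables, the $y$'s are odd pairwise anticommuting variables, and $E(Y)$ is the Grassmann algebra on the vector space with basis $Y$. $K[X]$ is the polynomial subalgebra in $X$. *)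

theory Defs
  imports "HOL-Computational_Algebra.Polynomial"
begin

text \<open>K[X] = K[x1,x2,x1',x2'] rendered as an iterated univariate polynomial ring.\<close>
type_synonym 'k px = "'k poly poly poly poly"

definition X1 :: "'k::comm_ring_1 px" where "X1 = [:0, 1:]"
definition X2 :: "'k::comm_ring_1 px" where "X2 = [:[:0, 1:]:]"
definition X1' :: "'k::comm_ring_1 px" where "X1' = [:[:[:0, 1:]:]:]"
definition X2' :: "'k::comm_ring_1 px" where "X2' = [:[:[:[:0, 1:]:]:]:]"

text \<open>K[X;Y] = K[X] \<otimes> E(Y): an element is a family of K[X]-coefficients indexed by the
  subsets S of the odd indices {0,1,2,3} (0 = y1, 1 = y2, 2 = y1', 3 = y2'); the coefficient
  of S is the coefficient of the ordered Grassmann monomial y_{s1} ... y_{sk}, s1 < ... < sk.\<close>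
type_synonym 'k sa = "nat set \<Rightarrow> 'k px"

definition sa_carrier :: "'k::comm_ring_1 sa set" where
  "sa_carrier = {f. \<forall>S. \<not> S \<subseteq> {0..<4} \<longrightarrow> f S = 0}"

definition inv_count :: "nat set \<Rightarrow> nat set \<Rightarrow> nat" where
  "inv_count A B = card {(a, b). a \<in> A \<and> b \<in> B \<and> b < a}"

definition sa_mult :: "'k::comm_ring_1 sa \<Rightarrow> 'k sa \<Rightarrow> 'k sa" where
  "sa_mult f g = (\<lambda>S. if S \<subseteq> {0..<4} then
      (\<Sum>A\<in>Pow S. (-1) ^ inv_count A (S - A) * f A * g (S - A)) else 0)"

definition sa_add :: "'k::comm_ring_1 sa \<Rightarrow> 'k sa \<Rightarrow> 'k sa" where
  "sa_add f g = (\<lambda>S. f S + g S)"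

definition sa_diff :: "'k::comm_ring_1 sa \<Rightarrow> 'k sa \<Rightarrow> 'k sa" where
  "sa_diff f g = (\<lambda>S. f S - g S)"

definition sa_zero :: "'k::comm_ring_1 sa" where
  "sa_zero = (\<lambda>S. 0)"

definition sa_smult :: "'k::comm_ring_1 px \<Rightarrow> 'k sa \<Rightarrow> 'k sa" where
  "sa_smult c f = (\<lambda>S. c * f S)"

definition sa_const :: "'k::comm_ring_1 px \<Rightarrow> 'k sa" where
  "sa_const p = (\<lambda>S. if S = {} then p else 0)"

definition sa_gen :: "nat \<Rightarrow> 'k::comm_ring_1 sa" where
  "sa_gen i = (\<lambda>S. if S = {i} then 1 else 0)"

abbreviation Y1 :: "'k::comm_ring_1 sa" where "Y1 \<equiv> sa_gen 0"
abbreviation Y2 :: "'k::comm_ring_1 sa" where "Y2 \<equiv> sa_gen 1"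
abbreviation Y1' :: "'k::comm_ring_1 sa" where "Y1' \<equiv> sa_gen 2"
abbreviation Y2' :: "'k::comm_ring_1 sa" where "Y2' \<equiv> sa_gen 3"

definition W1 :: "'k::comm_ring_1 sa" where
  "W1 = sa_diff (sa_mult (sa_const (X2' - X2)) Y1) (sa_mult (sa_const (X1' - X1)) Y2)"
definition W2 :: "'k::comm_ring_1 sa" where
  "W2 = sa_diff (sa_mult (sa_const (X2' - X2)) Y1') (sa_mult (sa_const (X1' - X1)) Y2')"

definition J :: "'k::comm_ring_1 sa set" where
  "J = {f \<in> sa_carrier. sa_mult f W1 = sa_zero} \<inter> {f \<in> sa_carrier. sa_mult f W2 = sa_zero}"

definition H1 :: "'k::comm_ring_1 sa" where
  "H1 = sa_mult (sa_mult (sa_mult Y1 Y2) Y1') Y2'"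
definition H2 :: "'k::comm_ring_1 sa" where
  "H2 = sa_mult (sa_mult Y1 Y2)
          (sa_diff (sa_mult Y1' (sa_const (X2' - X2))) (sa_mult Y2' (sa_const (X1' - X1))))"
definition H3 :: "'k::comm_ring_1 sa" where
  "H3 = sa_mult (sa_mult Y1' Y2')
          (sa_diff (sa_mult Y1 (sa_const (X2' - X2))) (sa_mult Y2 (sa_const (X1' - X1))))"
definition H4 :: "'k::comm_ring_1 sa" where
  "H4 = sa_mult
          (sa_diff (sa_mult Y1' (sa_const (X2' - X2))) (sa_mult Y2' (sa_const (X1' - X1))))
          (sa_diff (sa_mult Y1 (sa_const (X2' - X2))) (sa_mult Y2 (sa_const (X1' - X1))))"

end

theory Submission
  imports Defs
begin

definition mn :: "nat set \<Rightarrow> 'k::comm_ring_1 px \<Rightarrow> 'k sa" where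
  "mn T c = (\<lambda>S. if S = T then c else 0)"

lemma const_mn: "sa_const p = mn {} p" by (simp add: sa_const_def mn_def)
lemma gen_mn: "sa_gen i = mn {i} 1" by (simp add: sa_gen_def mn_def)

lemma inv_count_single_right: "inv_count A {b} = card (A \<inter> {b<..})"
proof -
  have "{(x, y). x \<in> A \<and> y \<in> {b} \<and> y < x} = (\<lambda>x. (x, b)) ` (A \<inter> {b<..})" by auto
  moreover have "inj_on (\<lambda>x. (x, b)) (A \<inter> {b<..})" by (auto simp: inj_on_def)
  ultimately show ?thesis unfolding inv_count_def by (simp add: card_image)
qed

lemma inv_count_single_left: "inv_count {a} B = card (B \<inter> {..<a})"
proof -
  have "{(x, y). x \<in> {a} \<and> y \<in> B \<and> y < x} = (\<lambda>y. (a, y)) ` (B \<inter> {..<a})" by auto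
  moreover have "inj_on (\<lambda>y. (a, y)) (B \<inter> {..<a})" by (auto simp: inj_on_def)
  ultimately show ?thesis unfolding inv_count_def by (simp add: card_image)
qed

lemma inv_count_empty: "inv_count {} B = 0" "inv_count A {} = 0"
  by (simp_all add: inv_count_def)

lemma mult_mn_right:
  assumes "S \<subseteq> {0..<4}"
  shows "sa_mult f (mn {i} c) S =
    (if i \<in> S then (-1) ^ inv_count (S - {i}) {i} * f (S - {i}) * c else 0)"
proof -
  have eq: "\<And>A. A \<in> Pow S \<Longrightarrow> (S - A = {i}) = (i \<in> S \<and> A = S - {i})" by auto
  have dd: "i \<in> S \<Longrightarrow> S - (S - {i}) = {i}" by auto
  have "sa_mult f (mn {i} c) S =
     (\<Sum>A\<in>Pow S. if A = S - {i} then (if i \<in> S then (-1) ^ inv_count (S - {i}) {i} * f (S - {i}) * c else 0) else 0)"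
    unfolding sa_mult_def mn_def using assms
    by (auto intro!: sum.cong simp: eq dd)
  also have "\<dots> = (if i \<in> S then (-1) ^ inv_count (S - {i}) {i} * f (S - {i}) * c else 0)"
    using finite_subset[OF assms] by (subst sum.delta) auto
  finally show ?thesis .
qed

lemma mult_mn_left:
  assumes "S \<subseteq> {0..<4}"
  shows "sa_mult (mn {i} c) g S =
    (if i \<in> S then (-1) ^ inv_count {i} (S - {i}) * c * g (S - {i}) else 0)"
proof -
  have "sa_mult (mn {i} c) g S = (\<Sum>A\<in>Pow S. (-1)^inv_count A (S-A) * (if A={i} then c else 0) * g (S-A))"
    unfolding sa_mult_def mn_def using assms by simp
  also have "\<dots> =
     (\<Sum>A\<in>Pow S. if A = {i} then (if i \<in> S then (-1) ^ inv_count {i} (S - {i}) * c * g (S - {i}) else 0) else 0)"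
    by (rule sum.cong) auto
  also have "\<dots> = (if i \<in> S then (-1) ^ inv_count {i} (S - {i}) * c * g (S - {i}) else 0)"
    using finite_subset[OF assms] by (subst sum.delta) auto
  finally show ?thesis .
qed

lemma mult_mn_mn_right:
  assumes "i \<notin> T" "insert i T \<subseteq> {0..<4}"
  shows "sa_mult (mn T c) (mn {i} d) = mn (insert i T) ((-1) ^ inv_count T {i} * c * d)"
proof
  fix S
  show "sa_mult (mn T c) (mn {i} d) S = mn (insert i T) ((-1) ^ inv_count T {i} * c * d) S"
  proof (cases "S = insert i T")
    case True
    have d: "S - {i} = T" using True assms(1) by blast
    have "sa_mult (mn T c) (mn {i} d) S = (-1) ^ inv_count (S - {i}) {i} * mn T c (S - {i}) * d"
      using mult_mn_right[of S "mn T c" i d] assms(2) True by simp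
    then show ?thesis unfolding d by (simp add: mn_def True)
  next
    case False
    show ?thesis
    proof (cases "S \<subseteq> {0..<4}")
      case True
      have "i \<in> S \<Longrightarrow> S - {i} \<noteq> T" using False by blast
      then have "sa_mult (mn T c) (mn {i} d) S = 0"
        using mult_mn_right[OF True, of "mn T c" i d] by (simp add: mn_def)
      then show ?thesis using False by (simp add: mn_def)
    next
      case F2: False
      then show ?thesis using False by (simp add: sa_mult_def mn_def)
    qed
  qed
qed

lemma mult_mn_mn_left:
  assumes "i \<notin> T" "insert i T \<subseteq> {0..<4}"
  shows "sa_mult (mn {i} c) (mn T d) = mn (insert i T) ((-1) ^ inv_count {i} T * c * d)"
proof
  fix S
  show "sa_mult (mn {i} c) (mn T d) S = mn (insert i T) ((-1) ^ inv_count {i} T * c * d) S"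
  proof (cases "S = insert i T")
    case True
    have d: "S - {i} = T" using True assms(1) by blast
    have "sa_mult (mn {i} c) (mn T d) S = (-1) ^ inv_count {i} (S - {i}) * c * mn T d (S - {i})"
      using mult_mn_left[of S i c "mn T d"] assms(2) True by simp
    then show ?thesis unfolding d by (simp add: mn_def True)
  next
    case False
    show ?thesis
    proof (cases "S \<subseteq> {0..<4}")
      case True
      have "i \<in> S \<Longrightarrow> S - {i} \<noteq> T" using False by blast
      then have "sa_mult (mn {i} c) (mn T d) S = 0"
        using mult_mn_left[OF True, of i c "mn T d"] by (simp add: mn_def)
      then show ?thesis using False by (simp add: mn_def)
    next
      case F2: False
      then show ?thesis using False by (simp add: sa_mult_def mn_def)
    qed
  qed
qed

lemma mult_diff_right: "sa_mult f (sa_diff g h) = sa_diff (sa_mult f g) (sa_mult f h)"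
  unfolding sa_mult_def sa_diff_def by (rule ext) (simp add: right_diff_distrib left_diff_distrib sum_subtractf)

lemma mult_diff_left: "sa_mult (sa_diff f g) h = sa_diff (sa_mult f h) (sa_mult g h)"
  unfolding sa_mult_def sa_diff_def by (rule ext) (simp add: right_diff_distrib left_diff_distrib sum_subtractf)

abbreviation aa :: "'k::comm_ring_1 px" where "aa \<equiv> X2' - X2"
abbreviation bb :: "'k::comm_ring_1 px" where "bb \<equiv> X1' - X1"

lemma const_gen: "i < 4 \<Longrightarrow> sa_mult (mn {} c) (mn {i} 1) = mn {i} c"
  by (subst mult_mn_mn_right) (auto simp: inv_count_empty)

lemma W1_eq: "W1 = sa_diff (mn {0} aa) (mn {1} bb)"
proof -
  have z: "(0::nat) < 4" and o: "(1::nat) < 4" by simp_all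
  show ?thesis unfolding W1_def const_mn gen_mn
    by (simp only: const_gen[OF z] const_gen[OF o])
qed

lemma W2_eq: "W2 = sa_diff (mn {2} aa) (mn {3} bb)"
proof -
  have z: "(2::nat) < 4" and o: "(3::nat) < 4" by simp_all
  show ?thesis unfolding W2_def const_mn gen_mn
    by (simp only: const_gen[OF z] const_gen[OF o])
qed

lemma H1_eq: "H1 = mn {3,2,1,0} 1"
  unfolding H1_def gen_mn
  by (simp add: mult_mn_mn_right inv_count_single_right)

lemma H2_eq: "H2 = sa_diff (mn {2,1,0} aa) (mn {3,1,0} bb)"
  unfolding H2_def gen_mn const_mn
  by (simp add: mult_mn_mn_right mult_mn_mn_left mult_diff_right mult_diff_left inv_count_single_right inv_count_empty)

lemma H3_eq: "H3 = sa_diff (mn {0,3,2} aa) (mn {1,3,2} bb)"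
  unfolding H3_def gen_mn const_mn
  by (simp add: mult_mn_mn_right mult_mn_mn_left mult_diff_right mult_diff_left inv_count_single_right inv_count_empty)

lemma mmr: assumes "i \<notin> T" "insert i T \<subseteq> {0..<4}" "inv_count T {i} = k"
  "(-1)^k * c * d = e" shows "sa_mult (mn T c) (mn {i} d) = mn (insert i T) e"
proof -
  have "sa_mult (mn T c) (mn {i} d) = mn (insert i T) ((-1) ^ inv_count T {i} * c * d)"
    by (rule mult_mn_mn_right[OF assms(1,2)])
  then show ?thesis using assms(3,4) by simp
qed

lemma mml: assumes "i \<notin> T" "insert i T \<subseteq> {0..<4}" "inv_count {i} T = k"
  "(-1)^k * c * d = e" shows "sa_mult (mn {i} c) (mn T d) = mn (insert i T) e"
proof -
  have "sa_mult (mn {i} c) (mn T d) = mn (insert i T) ((-1) ^ inv_count {i} T * c * d)"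
    by (rule mult_mn_mn_left[OF assms(1,2)])
  then show ?thesis using assms(3,4) by simp
qed

lemma H4_eq: "H4 = sa_diff (sa_diff (mn {0,2} (-(aa*aa))) (mn {0,3} (-(bb*aa))))
      (sa_diff (mn {1,2} (-(aa*bb))) (mn {1,3} (-(bb*bb))))"
proof -
  have q1: "sa_mult (mn {2} 1) (mn {} aa) = mn {2} aa"
    by (rule mml[where k=0]) (simp_all add: inv_count_empty)
  have q2: "sa_mult (mn {3} 1) (mn {} bb) = mn {3} bb"
    by (rule mml[where k=0]) (simp_all add: inv_count_empty)
  have q3: "sa_mult (mn {0} 1) (mn {} aa) = mn {0} aa"
    by (rule mml[where k=0]) (simp_all add: inv_count_empty)
  have q4: "sa_mult (mn {1} 1) (mn {} bb) = mn {1} bb"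
    by (rule mml[where k=0]) (simp_all add: inv_count_empty)
  have p1: "sa_mult (mn {2} aa) (mn {0} aa) = mn {0,2} (-(aa*aa))"
    apply (rule mmr[where k=1]) apply simp apply simp apply (simp add: inv_count_single_right)
    apply (simp only: power_one_right mult_minus_left mult_1_left) done
  have p2: "sa_mult (mn {3} bb) (mn {0} aa) = mn {0,3} (-(bb*aa))"
    apply (rule mmr[where k=1]) apply simp apply simp apply (simp add: inv_count_single_right)
    apply (simp only: power_one_right mult_minus_left mult_1_left) done
  have p3: "sa_mult (mn {2} aa) (mn {1} bb) = mn {1,2} (-(aa*bb))"
    apply (rule mmr[where k=1]) apply simp apply simp apply (simp add: inv_count_single_right)
    apply (simp only: power_one_right mult_minus_left mult_1_left) done
  have p4: "sa_mult (mn {3} bb) (mn {1} bb) = mn {1,3} (-(bb*bb))"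
    apply (rule mmr[where k=1]) apply simp apply simp apply (simp add: inv_count_single_right)
    apply (simp only: power_one_right mult_minus_left mult_1_left) done
  show ?thesis unfolding H4_def gen_mn const_mn
    by (simp only: q1 q2 q3 q4 mult_diff_left mult_diff_right p1 p2 p3 p4)
qed

lemma aa_const: "(aa :: 'k::comm_ring_1 px) = [: [:[:[:0,1:]:]:] - [:0,1:] :]"
  by (simp add: X2_def X2'_def)

lemma aa_nz: "(aa :: 'k::field px) \<noteq> 0"
  by (simp add: X2_def X2'_def)

lemma bb_coeff: "coeff (bb :: 'k::comm_ring_1 px) 1 = -1"
  by (simp add: X1_def X1'_def)


lemma W1_at: "S \<subseteq> {0..<4} \<Longrightarrow> sa_mult f W1 S =
  (if 0 \<in> S then (-1)^card ((S-{0}) \<inter> {0<..}) * f (S-{0}) * aa else 0) -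
  (if 1 \<in> S then (-1)^card ((S-{1}) \<inter> {1<..}) * f (S-{1}) * bb else 0)"
proof -
  assume S: "S \<subseteq> {0..<4}"
  have "sa_mult f W1 S = sa_mult f (mn {0} aa) S - sa_mult f (mn {1} bb) S"
    unfolding W1_eq mult_diff_right by (simp only: sa_diff_def)
  then show ?thesis by (simp only: mult_mn_right[OF S] inv_count_single_right)
qed

lemma W2_at: "S \<subseteq> {0..<4} \<Longrightarrow> sa_mult f W2 S =
  (if 2 \<in> S then (-1)^card ((S-{2}) \<inter> {2<..}) * f (S-{2}) * aa else 0) -
  (if 3 \<in> S then (-1)^card ((S-{3}) \<inter> {3<..}) * f (S-{3}) * bb else 0)"
proof -
  assume S: "S \<subseteq> {0..<4}"
  have "sa_mult f W2 S = sa_mult f (mn {2} aa) S - sa_mult f (mn {3} bb) S"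
    unfolding W2_eq mult_diff_right by (simp only: sa_diff_def)
  then show ?thesis by (simp only: mult_mn_right[OF S] inv_count_single_right)
qed

lemma cases16_aux:
  assumes "S = (if b3 then {3} else {}) \<union> (if b2 then {2::nat} else {}) \<union> (if b1 then {1} else {}) \<union> (if b0 then {0} else {})"
  shows "S = {} \<or> S = {0} \<or> S = {1} \<or> S = {2} \<or> S = {3} \<or> S = {0,1} \<or> S = {0,2} \<or> S = {0,3}
   \<or> S = {1,2} \<or> S = {1,3} \<or> S = {2,3} \<or> S = {0,1,2} \<or> S = {0,1,3} \<or> S = {0,2,3} \<or> S = {1,2,3}
   \<or> S = {0,1,2,3}"
  using assms by (cases b0; cases b1; cases b2; cases b3) simp_all

lemma cases16: assumes "S \<subseteq> {0..<4::nat}"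
  shows "S = {} \<or> S = {0} \<or> S = {1} \<or> S = {2} \<or> S = {3} \<or> S = {0,1} \<or> S = {0,2} \<or> S = {0,3}
   \<or> S = {1,2} \<or> S = {1,3} \<or> S = {2,3} \<or> S = {0,1,2} \<or> S = {0,1,3} \<or> S = {0,2,3} \<or> S = {1,2,3}
   \<or> S = {0,1,2,3}"
proof (rule cases16_aux)
  have h: "\<And>x. x \<in> S \<Longrightarrow> x = 0 \<or> x = 1 \<or> x = 2 \<or> x = 3" using assms by auto
  show "S = (if 3 \<in> S then {3} else {}) \<union> (if 2 \<in> S then {2::nat} else {}) \<union> (if 1 \<in> S then {1} else {}) \<union> (if 0 \<in> S then {0} else {})"
    using h by auto
qed

lemma mn_conc: "mn T c S = (if S \<subseteq> T \<and> T \<subseteq> S then c else 0)"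
  by (auto simp: mn_def)

lemma mn_out: "\<not> S \<subseteq> {0..<4} \<Longrightarrow> T \<subseteq> {0..<4} \<Longrightarrow> mn T c S = 0"
  by (auto simp: mn_def)

lemma comb_val: "sa_add (sa_add (sa_add (sa_smult c1 H1) (sa_smult c2 H2)) (sa_smult c3 H3)) (sa_smult c4 H4) S
  = c1 * H1 S + c2 * H2 S + c3 * H3 S + c4 * H4 S"
  by (simp add: sa_add_def sa_smult_def)

lemma alg_cancel: "(a::'k::field px) \<noteq> 0 \<Longrightarrow> x * a = y * a \<Longrightarrow> x = y"
  using mult_right_cancel by blast

lemma bb_form: "(bb :: 'k::comm_ring_1 px) = [: [:[:0,1:]:], -1 :]"
  by (simp add: X1_def X1'_def)

lemma coeff_mult_lin: "coeff (v * [:e, -1:]) (Suc n) = e * coeff v (Suc n) - coeff v n"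
  for v :: "'a::comm_ring_1 poly"
  by (simp add: mult_pCons_right algebra_simps)

lemma const_dvd_lin:
  fixes c e :: "'a::{comm_ring_1,semiring_no_zero_divisors}" and v :: "'a poly"
  assumes "[:c:] dvd v * [:e, -1:]"
  shows "[:c:] dvd v"
proof -
  have H: "\<And>n. c dvd coeff (v * [:e, -1:]) n" using assms const_poly_dvd_iff by blast
  define N where "N = Suc (degree v)"
  have step: "\<And>k. c dvd coeff v (N - k)"
  proof -
    fix k show "c dvd coeff v (N - k)"
    proof (induction k)
      case 0
      have "coeff v N = 0" unfolding N_def by (rule coeff_eq_0) simp
      then show ?case by simp
    next
      case (Suc k)
      show ?case
      proof (cases "k < N")
        case True
        then obtain j where j: "N - k = Suc j" "N - Suc k = j" by (metis Suc_diff_Suc zero_less_diff)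
        have "c dvd e * coeff v (Suc j) - coeff v j" using H[of "Suc j"] coeff_mult_lin[of v e j] by simp
        moreover have "c dvd e * coeff v (Suc j)" using Suc.IH j(1) by simp
        ultimately have "c dvd coeff v j"
          by (metis dvd_diff minus_diff_eq diff_diff_eq2 add_diff_cancel_left' dvd_minus_iff)
        then show ?thesis using j(2) by simp
      next
        case False
        then have "N - Suc k = N - k" by simp
        then show ?thesis using Suc.IH by simp
      qed
    qed
  qed
  have "\<forall>n. c dvd coeff v n"
  proof
    fix n show "c dvd coeff v n"
    proof (cases "n \<le> N")
      case True
      then have "N - (N - n) = n" by simp
      then show ?thesis using step[of "N - n"] by simp
    next
      case False
      then have "coeff v n = 0" unfolding N_def by (intro coeff_eq_0) simp
      then show ?thesis by simp
    qed
  qed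
  then show ?thesis using const_poly_dvd_iff by blast
qed

lemma aa_dvd: "(aa :: 'k::field px) dvd v * bb \<Longrightarrow> aa dvd v"
  unfolding aa_const bb_form by (rule const_dvd_lin)

lemma aa2_dvd: "(aa * aa :: 'k::field px) dvd v * bb \<Longrightarrow> aa * aa dvd v"
proof -
  assume h: "aa * aa dvd v * bb"
  obtain u where u: "(aa :: 'k px) = [:u:]" using aa_const by blast
  have "(aa * aa :: 'k px) = [: u * u :]" unfolding u by simp
  then show ?thesis using h unfolding bb_form by (metis const_dvd_lin)
qed

lemma alg3:
  fixes a b u v :: "'k::field px"
  assumes a: "a \<noteq> 0" and cop: "\<And>v. a dvd v * b \<Longrightarrow> a dvd v" and e: "- (u * a) - v * b = 0"
  shows "\<exists>c. v = c * a \<and> u = c * (- b)"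
proof -
  have h: "-(u * a) = v * b" by (subst eq_iff_diff_eq_0) (rule e)
  have m: "a * (-u) = -(u * a)" by (simp add: mult.commute)
  have "v * b = a * (-u)" by (rule trans[OF sym[OF h] sym[OF m]])
  then have "a dvd v * b" by (rule dvdI)
  then have "a dvd v" by (rule cop)
  then obtain c where v: "v = a * c" by (auto elim: dvdE)
  have h': "u * a = -(v * b)" by (simp add: h[symmetric])
  have "u * a = (c * (-b)) * a" using h' unfolding v by (simp add: algebra_simps)
  then have "u = c * (-b)" by (rule alg_cancel[OF a])
  then show ?thesis using v by (auto simp: mult.commute)
qed

lemma alg2:
  fixes a b p q r s :: "'k::field px"
  assumes a: "a \<noteq> 0" and cop: "\<And>v. a * a dvd v * b \<Longrightarrow> a * a dvd v"
    and eA: "r * a + p * b = 0" and eB: "s * a + q * b = 0"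
    and eC: "- (q * a) - p * b = 0" and eD: "- (s * a) - r * b = 0"
  shows "\<exists>c. p = c * (-(a*a)) \<and> q = c * (b*a) \<and> r = c * (a*b) \<and> s = c * (-(b*b))"
proof -
  have h1: "p * b = -(r * a)" using eA by (simp only: add_eq_0_iff)
  have h2': "-(q * a) = p * b" by (subst eq_iff_diff_eq_0) (rule eC)
  have h2: "p * b = -(q * a)" using h2' by (rule sym)
  have "-(r * a) = -(q * a)" using trans[OF sym[OF h1] h2] .
  then have "r * a = q * a" by (simp only: neg_equal_iff_equal)
  then have rq: "r = q" by (rule alg_cancel[OF a])
  have h3: "q * b = -(s * a)" using eB by (simp only: add_eq_0_iff)
  have "s * a * a = (-(q * b)) * a" using h3 by simp
  also have "\<dots> = (-(q * a)) * b" by (simp add: algebra_simps)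
  also have "\<dots> = p * b * b" using h2 by simp
  finally have "s * a * a = p * b * b" .
  then have "(p * b) * b = a * a * s" by (simp add: algebra_simps)
  then have "a * a dvd (p * b) * b" by (rule dvdI)
  then have "a * a dvd p * b" by (rule cop)
  then have "a * a dvd p" by (rule cop)
  then obtain k where p: "p = a * a * k" by (auto elim: dvdE)
  have "q * a = (-k) * (b * a) * a" using h2 unfolding p by (simp add: algebra_simps)
  then have q: "q = (-k) * (b * a)" by (rule alg_cancel[OF a])
  have "s * a = (-k) * (-(b*b)) * a" using h3 unfolding q by (simp add: algebra_simps) blast
  then have s: "s = (-k) * (-(b*b))" by (rule alg_cancel[OF a])
  show ?thesis by (rule exI[of _ "-k"]) (simp add: p q s rq algebra_simps)
qed

abbreviation comb :: "'k::comm_ring_1 px \<Rightarrow> 'k px \<Rightarrow> 'k px \<Rightarrow> 'k px \<Rightarrow> 'k sa" where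
  "comb c1 c2 c3 c4 \<equiv> sa_add (sa_add (sa_add (sa_smult c1 H1) (sa_smult c2 H2)) (sa_smult c3 H3)) (sa_smult c4 H4)"

lemma comb_out: "\<not> S \<subseteq> {0..<4} \<Longrightarrow> comb c1 c2 c3 c4 S = 0"
  by (simp add: sa_add_def sa_smult_def H1_eq H2_eq H3_eq H4_eq sa_diff_def mn_out)

lemma J_sub:
  fixes f :: "'k::field sa"
  assumes fJ: "f \<in> J"
  shows "\<exists>c1 c2 c3 c4. f = comb c1 c2 c3 c4"
proof -
  have car: "\<And>S. \<not> S \<subseteq> {0..<4} \<Longrightarrow> f S = 0" using fJ by (auto simp: J_def sa_carrier_def)
  have "sa_mult f W1 = sa_zero" "sa_mult f W2 = sa_zero" using fJ by (auto simp: J_def)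
  then have z1: "\<And>S. sa_mult f W1 S = 0" and z2: "\<And>S. sa_mult f W2 S = 0"
    by (simp_all add: sa_zero_def)
  have anz: "(aa :: 'k px) \<noteq> 0" by (rule aa_nz)
  have f_e: "f {} = 0" using W1_at[of "{0}" f] z1[of "{0}"] anz by (simp add: insert_Diff_if)
  have f_0: "f {0} = 0" using W2_at[of "{0,2}" f] z2[of "{0,2}"] anz by (simp add: insert_Diff_if)
  have f_2: "f {2} = 0" using W1_at[of "{0,2}" f] z1[of "{0,2}"] anz by (simp add: insert_Diff_if)
  have f_3: "f {3} = 0" using W1_at[of "{0,3}" f] z1[of "{0,3}"] anz by (simp add: insert_Diff_if)
  have f_1: "f {1} = 0" using W1_at[of "{0,1}" f] z1[of "{0,1}"] anz f_0 by (simp add: insert_Diff_if)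
  have f_01: "f {0,1} = 0" using W2_at[of "{0,1,2}" f] z2[of "{0,1,2}"] anz by (simp add: insert_Diff_if)
  have f_23: "f {2,3} = 0" using W1_at[of "{0,2,3}" f] z1[of "{0,2,3}"] anz by (simp add: insert_Diff_if)
  have eA: "f {1,2} * aa + f {0,2} * bb = 0" using W1_at[of "{0,1,2}" f] z1[of "{0,1,2}"] by (simp add: insert_Diff_if)
  have eB: "f {1,3} * aa + f {0,3} * bb = 0" using W1_at[of "{0,1,3}" f] z1[of "{0,1,3}"] by (simp add: insert_Diff_if)
  have eC: "-(f {0,3} * aa) - f {0,2} * bb = 0" using W2_at[of "{0,2,3}" f] z2[of "{0,2,3}"] by (simp add: insert_Diff_if)
  have eD: "-(f {1,3} * aa) - f {1,2} * bb = 0" using W2_at[of "{1,2,3}" f] z2[of "{1,2,3}"] by (simp add: insert_Diff_if)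
  have eE: "-(f {1,2,3} * aa) - f {0,2,3} * bb = 0" using W1_at[of "{0,1,2,3}" f] z1[of "{0,1,2,3}"] by (simp add: insert_Diff_if)
  have eF: "-(f {0,1,3} * aa) - f {0,1,2} * bb = 0" using W2_at[of "{0,1,2,3}" f] z2[of "{0,1,2,3}"] by (simp add: insert_Diff_if)
  obtain c4 where c4: "f {0,2} = c4 * (-(aa*aa))" "f {0,3} = c4 * (bb*aa)" "f {1,2} = c4 * (aa*bb)" "f {1,3} = c4 * (-(bb*bb))"
    using alg2[OF anz aa2_dvd eA eB eC eD] by blast
  obtain c2 where c2: "f {0,1,2} = c2 * aa" "f {0,1,3} = c2 * (-bb)"
    using alg3[OF anz aa_dvd eF] by blast
  obtain c3 where c3: "f {0,2,3} = c3 * aa" "f {1,2,3} = c3 * (-bb)"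
    using alg3[OF anz aa_dvd eE] by blast
  have "f = comb (f {0,1,2,3}) c2 c3 c4"
  proof
    fix S
    show "f S = comb (f {0,1,2,3}) c2 c3 c4 S"
    proof (cases "S \<subseteq> {0..<4}")
      case True
      from cases16[OF True] show ?thesis
        by (elim disjE) (simp_all add: sa_add_def sa_smult_def H1_eq H2_eq H3_eq H4_eq sa_diff_def mn_conc
          f_e f_0 f_1[simplified] f_2 f_3 f_01[simplified] f_23 c2[simplified] c3[simplified] c4[simplified])
    next
      case False
      then show ?thesis by (simp add: car comb_out)
    qed
  qed
  then show ?thesis by blast
qed

lemma J_sup: "comb c1 c2 c3 c4 \<in> (J :: 'k::field sa set)"
proof -
  have car: "comb c1 c2 c3 c4 \<in> (sa_carrier :: 'k sa set)" unfolding sa_carrier_def using comb_out by blast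
  have m1: "sa_mult (comb c1 c2 c3 c4) W1 = (sa_zero :: 'k sa)"
  proof
    fix S :: "nat set"
    show "sa_mult (comb c1 c2 c3 c4) W1 S = (sa_zero :: 'k sa) S"
    proof (cases "S \<subseteq> {0..<4}")
      case True
      show ?thesis unfolding W1_at[OF True] sa_zero_def
        using cases16[OF True]
        by (elim disjE) (simp_all add: insert_Diff_if sa_add_def sa_smult_def H1_eq H2_eq H3_eq H4_eq
            sa_diff_def mn_conc algebra_simps)
    next
      case False
      then show ?thesis by (simp add: sa_mult_def sa_zero_def)
    qed
  qed
  have m2: "sa_mult (comb c1 c2 c3 c4) W2 = (sa_zero :: 'k sa)"
  proof
    fix S :: "nat set"
    show "sa_mult (comb c1 c2 c3 c4) W2 S = (sa_zero :: 'k sa) S"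
    proof (cases "S \<subseteq> {0..<4}")
      case True
      show ?thesis unfolding W2_at[OF True] sa_zero_def
        using cases16[OF True]
        by (elim disjE) (simp_all add: insert_Diff_if sa_add_def sa_smult_def H1_eq H2_eq H3_eq H4_eq
            sa_diff_def mn_conc algebra_simps)
    next
      case False
      then show ?thesis by (simp add: sa_mult_def sa_zero_def)
    qed
  qed
  show ?thesis unfolding J_def using car m1 m2 by blast
qed

theorem proposition1:
  assumes "infinite (UNIV :: 'k::field set)"
    and "(2::'k) \<noteq> 0"
  shows "(J :: 'k sa set) =
    {sa_add (sa_add (sa_add (sa_smult c1 H1) (sa_smult c2 H2)) (sa_smult c3 H3)) (sa_smult c4 H4)
      | c1 c2 c3 c4. True}"
proof
  show "(J :: 'k sa set) \<subseteq> {sa_add (sa_add (sa_add (sa_smult c1 H1) (sa_smult c2 H2)) (sa_smult c3 H3)) (sa_smult c4 H4)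
      | c1 c2 c3 c4. True}"
  proof
    fix f :: "'k sa" assume "f \<in> J"
    then obtain c1 c2 c3 c4 where "f = comb c1 c2 c3 c4" using J_sub by blast
    then show "f \<in> {sa_add (sa_add (sa_add (sa_smult c1 H1) (sa_smult c2 H2)) (sa_smult c3 H3)) (sa_smult c4 H4)
      | c1 c2 c3 c4. True}" by blast
  qed
next
  show "{sa_add (sa_add (sa_add (sa_smult c1 H1) (sa_smult c2 H2)) (sa_smult c3 H3)) (sa_smult c4 H4)
      | c1 c2 c3 c4. True} \<subseteq> (J :: 'k sa set)"
    using J_sup by blast
qed

end
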